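(* Let $n\ge 2$, $b_i>0$, $\alpha_i>0$ for $i=1,\dots,n$ with $\alpha_i\ne\alpha_{i+1}$ for all $i$, and let $g(t)=\sum_{i=1}^n b_ie^{-\alpha_i t}$. Then $$\dot g(t)^2-g(t)\ddot g(t)<0\quad\text{for all } t\ge 0.$$ Consequently, $g\,\mathds{1}_{[0,\infty)}$ is nonnegative but not log-concave; in particular, strongly unimodal LTI systems are not closed under parallel interconnection.
   Context: A function $f:\mathbb{R}\to\mathbb{R}_{\ge0}$ is log-concave if $f(\lambda x+(1-\lambda)y)\ge f(x)^\lambda f(y)^{1-\lambda}$ for all $x,y\in\mathbb{R}$ and $\lambda\in[0,1]$. A causal LTI system with impulse response $g$ maps $u$ to $g\ast u$, $(g\ast u)(t)=\int g(t-\tau)u(\tau)d\tau$; it is strongly unimodal if it maps every quasi-concave (unimodal) function to a quasi-concave function, where $f$ is quasi-concave if $f(\lambda x+(1-\lambda)y)\ge\min\{f(x),f(y)\}$. The parallel interconnection of systems with impulse responses $g_1,g_2$ has impulse response $g_1+g_2$; each first-order system with impulse response $b_ie^{-\alpha_i t}\mathds{1}_{[0,\infty)}$, $b_i,\alpha_i>0$, is strongly unimodal. *)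

theory Defs
  imports "HOL-Analysis.Analysis"
begin

definition log_concave :: "(real \<Rightarrow> real) \<Rightarrow> bool" where
  "log_concave f \<longleftrightarrow> (\<forall>x. 0 \<le> f x) \<and>
     (\<forall>x y lam. 0 \<le> lam \<and> lam \<le> 1 \<longrightarrow>
        f (lam * x + (1 - lam) * y) \<ge> f x powr lam * f y powr (1 - lam))"

end

theory Submission
  imports Defs
begin

lemma cs_identity:
  fixes w a :: "nat \<Rightarrow> real"
  shows "2 * ((\<Sum>i\<in>S. w i) * (\<Sum>i\<in>S. w i * (a i)\<^sup>2) - (\<Sum>i\<in>S. w i * a i)\<^sup>2)
    = (\<Sum>i\<in>S. \<Sum>j\<in>S. w i * w j * (a i - a j)\<^sup>2)"
proof -
  have e: "\<And>i j. w i * w j * (a i - a j)\<^sup>2 = w j * (w i * (a i)\<^sup>2) + w i * (w j * (a j)\<^sup>2) - 2 * ((w i * a i) * (w j * a j))"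
    by (simp add: power2_eq_square algebra_simps)
  have A: "(\<Sum>i\<in>S. \<Sum>j\<in>S. w j * (w i * (a i)\<^sup>2)) = (\<Sum>i\<in>S. w i) * (\<Sum>i\<in>S. w i * (a i)\<^sup>2)"
    by (simp add: sum_distrib_left sum_distrib_right mult.commute)
  have B: "(\<Sum>i\<in>S. \<Sum>j\<in>S. w i * (w j * (a j)\<^sup>2)) = (\<Sum>i\<in>S. w i) * (\<Sum>i\<in>S. w i * (a i)\<^sup>2)"
    by (simp add: sum_distrib_left[symmetric] sum_distrib_right[symmetric])
  have C: "(\<Sum>i\<in>S. \<Sum>j\<in>S. 2 * ((w i * a i) * (w j * a j))) = 2 * (\<Sum>i\<in>S. w i * a i)\<^sup>2"
  proof -
    have "(\<Sum>i\<in>S. \<Sum>j\<in>S. 2 * ((w i * a i) * (w j * a j))) = (\<Sum>i\<in>S. 2 * (w i * a i) * (\<Sum>j\<in>S. w j * a j))"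
      by (rule sum.cong[OF refl]) (simp add: sum_distrib_left mult.assoc)
    also have "\<dots> = 2 * (\<Sum>i\<in>S. w i * a i) * (\<Sum>j\<in>S. w j * a j)"
      by (simp add: sum_distrib_right[symmetric] sum_distrib_left[symmetric])
    finally show ?thesis by (simp add: power2_eq_square)
  qed
  show ?thesis
    unfolding e
    by (simp only: sum.distrib sum_subtractf A B C) simp
qed

lemma cs_strict:
  fixes w a :: "nat \<Rightarrow> real"
  assumes "finite S" "\<forall>i\<in>S. w i > 0" "i \<in> S" "j \<in> S" "a i \<noteq> a j"
  shows "(\<Sum>i\<in>S. w i * a i)\<^sup>2 < (\<Sum>i\<in>S. w i) * (\<Sum>i\<in>S. w i * (a i)\<^sup>2)"
proof -
  have "0 < (\<Sum>i\<in>S. \<Sum>j\<in>S. w i * w j * (a i - a j)\<^sup>2)"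
  proof (rule sum_pos2[OF assms(1) assms(3)])
    show "0 < (\<Sum>j\<in>S. w i * w j * (a i - a j)\<^sup>2)"
    proof (rule sum_pos2[OF assms(1) assms(4)])
      have "0 < w i" "0 < w j" using assms by auto
      then show "0 < w i * w j * (a i - a j)\<^sup>2" using assms(5) by simp
      show "0 \<le> w i * w m * (a i - a m)\<^sup>2" if "m \<in> S" for m
      proof -
        have "0 \<le> w i" "0 \<le> w m" using assms that by (auto intro: less_imp_le)
        then show "0 \<le> w i * w m * (a i - a m)\<^sup>2" by simp
      qed
    qed
    show "0 \<le> (\<Sum>j\<in>S. w k * w j * (a k - a j)\<^sup>2)" if k: "k \<in> S" for k
    proof -
      show "0 \<le> (\<Sum>j\<in>S. w k * w j * (a k - a j)\<^sup>2)"
      proof (rule sum_nonneg)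
        fix m assume "m \<in> S"
        then have "0 \<le> w k" "0 \<le> w m" using k assms(2) by (auto intro: less_imp_le)
        then show "0 \<le> w k * w m * (a k - a m)\<^sup>2" by simp
      qed
    qed
  qed
  then show ?thesis using cs_identity[of w S a] by (smt (verit))
qed

theorem lemma6:
  fixes n :: nat and b \<alpha> :: "nat \<Rightarrow> real" and g :: "real \<Rightarrow> real"
  assumes "n \<ge> 2"
    and "\<forall>i\<in>{1..n}. b i > 0"
    and "\<forall>i\<in>{1..n}. \<alpha> i > 0"
    and "\<forall>i\<in>{1..<n}. \<alpha> i \<noteq> \<alpha> (Suc i)"
    and "g = (\<lambda>t. \<Sum>i=1..n. b i * exp (- \<alpha> i * t))"
  shows "(\<forall>t\<ge>0. (deriv g t)\<^sup>2 - g t * deriv (deriv g) t < 0)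
    \<and> (\<forall>t. 0 \<le> indicator {0..} t * g t)
    \<and> \<not> log_concave (\<lambda>t. indicator {0..} t * g t)"
proof -
  have i1: "1 \<in> {1..n}" "2 \<in> {1..n}" using assms(1) by auto
  have a12: "\<alpha> 1 \<noteq> \<alpha> 2" using assms(4) assms(1) by (auto simp: numeral_2_eq_2)
  have gpos: "g t > 0" for t
    unfolding assms(5) using assms(2) i1 by (intro sum_pos) auto
  have d1: "(g has_real_derivative (\<Sum>i=1..n. - (b i * \<alpha> i) * exp (- \<alpha> i * t))) (at t)" for t
    unfolding assms(5) by (auto intro!: derivative_eq_intros sum.cong)
  have dg: "deriv g = (\<lambda>t. \<Sum>i=1..n. - (b i * \<alpha> i) * exp (- \<alpha> i * t))"
    using d1 DERIV_imp_deriv by blast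
  have d2: "((\<lambda>t. \<Sum>i=1..n. - (b i * \<alpha> i) * exp (- \<alpha> i * t)) has_real_derivative
       (\<Sum>i=1..n. (b i * exp (- \<alpha> i * t)) * (\<alpha> i)\<^sup>2)) (at t)" for t
    by (auto intro!: derivative_eq_intros sum.cong simp: power2_eq_square)
  have ddg: "deriv (deriv g) = (\<lambda>t. \<Sum>i=1..n. (b i * exp (- \<alpha> i * t)) * (\<alpha> i)\<^sup>2)"
    unfolding dg using d2 DERIV_imp_deriv by blast
  have P1: "(deriv g t)\<^sup>2 - g t * deriv (deriv g) t < 0" for t
  proof -
    have "(\<Sum>i=1..n. (b i * exp (- \<alpha> i * t)) * \<alpha> i)\<^sup>2 <
      (\<Sum>i=1..n. b i * exp (- \<alpha> i * t)) * (\<Sum>i=1..n. (b i * exp (- \<alpha> i * t)) * (\<alpha> i)\<^sup>2)"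
      by (rule cs_strict[OF _ _ i1 a12]) (use assms(2) in auto)
    moreover have "(deriv g t)\<^sup>2 = (\<Sum>i=1..n. (b i * exp (- \<alpha> i * t)) * \<alpha> i)\<^sup>2"
    proof -
      have "deriv g t = - (\<Sum>i=1..n. (b i * exp (- \<alpha> i * t)) * \<alpha> i)"
        unfolding dg by (simp add: sum_negf[symmetric] algebra_simps)
      then show ?thesis by simp
    qed
    moreover have "g t * deriv (deriv g) t = (\<Sum>i=1..n. b i * exp (- \<alpha> i * t)) * (\<Sum>i=1..n. (b i * exp (- \<alpha> i * t)) * (\<alpha> i)\<^sup>2)"
      by (subst ddg) (simp add: assms(5))
    ultimately show ?thesis by simp
  qed
  have P2: "\<forall>t. 0 \<le> indicator {0..} t * g t"
    using gpos by (simp add: indicator_def less_imp_le)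
  have P3: "\<not> log_concave (\<lambda>t. indicator {0..} t * g t)"
  proof
    assume "log_concave (\<lambda>t. indicator {0..} t * g t)"
    then have "g 1 \<ge> g 0 powr (1/2) * g 2 powr (1/2)"
    proof -
      have H: "\<forall>x y lam. 0 \<le> lam \<and> lam \<le> 1 \<longrightarrow>
        indicator {0..} (lam * x + (1 - lam) * y) * g (lam * x + (1 - lam) * y) \<ge>
        (indicator {0..} x * g x) powr lam * (indicator {0..} y * g y) powr (1 - lam)"
        using \<open>log_concave _\<close> unfolding log_concave_def by blast
      have "indicator {0..} ((1/2) * 0 + (1 - 1/2) * 2::real) * g ((1/2) * 0 + (1 - 1/2) * 2) \<ge>
        (indicator {0..} (0::real) * g 0) powr (1/2) * (indicator {0..} (2::real) * g 2) powr (1 - 1/2)"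
        using spec[OF spec[OF spec[OF H, of 0], of 2], of "1/2"] by simp
      then show ?thesis by (simp add: indicator_def)
    qed
    also have "g 0 powr (1/2) * g 2 powr (1/2) = sqrt (g 0 * g 2)"
      using gpos[of 0] gpos[of 2] by (simp add: powr_half_sqrt less_imp_le real_sqrt_mult)
    finally have le: "sqrt (g 0 * g 2) \<le> g 1" .
    have "(\<Sum>i=1..n. b i * exp (- \<alpha> i))\<^sup>2 <
      (\<Sum>i=1..n. b i) * (\<Sum>i=1..n. b i * (exp (- \<alpha> i))\<^sup>2)"
      by (rule cs_strict[OF _ _ i1]) (use assms(2) a12 in auto)
    moreover have "(exp (- \<alpha> i))\<^sup>2 = exp (- \<alpha> i * 2)" for i
      by (simp add: power2_eq_square exp_add[symmetric])
    ultimately have "(g 1)\<^sup>2 < g 0 * g 2" unfolding assms(5) by simp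
    moreover have "g 0 * g 2 \<le> (g 1)\<^sup>2"
    proof -
      have s: "(sqrt (g 0 * g 2))\<^sup>2 = g 0 * g 2" using gpos[of 0] gpos[of 2] by simp
      have "(sqrt (g 0 * g 2))\<^sup>2 \<le> (g 1)\<^sup>2" using le gpos[of 0] gpos[of 2] by (intro power_mono) auto
      then show ?thesis using s by simp
    qed
    ultimately show False by linarith
  qed
  show ?thesis using P1 P2 P3 by blast
qed

end
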